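(* Let $\mu\ge\lambda>0$. Let $\zeta_t^O$ be the nearest neighbours three state contact process with parameters $(\lambda,\mu)$ started from the standard initial configuration, with $I_t=\{x:\zeta_t^O(x)=1\}$, $r_t=\sup I_t$, $l_t=\inf I_t$, and let $\xi_t^{\mathbb Z}$ be the nearest neighbours contact process with parameter $\mu$ started from $\mathbb Z$, the two coupled by the graphical construction. Then for all $t\ge0$, $I_t=\xi_t^{\mathbb Z}\cap[l_t,r_t]$ on the event $\{I_t\ne\emptyset\}$.
   Context: The nearest neighbours three state contact process with parameters $(\lambda,\mu)$ has state space $\{-1,0,1\}^{\mathbb Z}$; each site $x$ makes transitions $-1\to1$ at rate $\lambda n_t(x)$, $0\to1$ at rate $\mu n_t(x)$, $1\to0$ at rate 1, where $n_t(x)$ is the number of $y\in\{x-1,x+1\}$ in state 1. The standard initial configuration has the origin in state 1 and all other sites in state $-1$. Graphical construction (for $\mu\ge\lambda$): for each $x\in\mathbb Z$ and $y\in\{x-1,x+1\}$ take independent Poisson processes of rate $\lambda$ ($\lambda$-arrows from $x$ to $y$) and rate $\mu-\lambda$ ($(\mu-\lambda)$-arrows from $x$ to $y$), and for each $x$ an independent rate-1 Poisson process of recovery marks at $x$. The three state process is defined from these: at a $\lambda$-arrow from $x$ to $y$, if just before $x$ is in state 1 and $y$ in state $0$ or $-1$, then $y$ becomes 1; at a $(\mu-\lambda)$-arrow from $x$ to $y$, if just before $x$ is in state 1 and $y$ in state 0, then $y$ becomes 1; at a recovery mark at $x$, if $x$ is in state 1 it becomes 0. The contact process with parameter $\mu$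 started from $A\subseteq\mathbb Z$ is $\xi_t^A=\{y:$ there is an oriented path from $(x,0)$ for some $x\in A$ to $(y,t)$ moving up time lines in increasing time without passing through a recovery mark and along arrows of either type in the direction of the arrow$\}$. Processes built from the same realization are said to be coupled by the graphical construction. *)

theory Defs
  imports Complex_Main
begin

text \<open>A realization of the graphical construction is given pathwise as a map
  from marks to the set of times at which that mark occurs:
  LamArrow x y : the lambda-arrows from x to y,
  MuArrow x y  : the (mu - lambda)-arrows from x to y,
  Recov x      : the recovery marks at x.\<close>

datatype mark = LamArrow int int | MuArrow int int | Recov int

type_synonym realization = "mark \<Rightarrow> real set"

definition no_crossing :: "realization \<Rightarrow> real \<Rightarrow> int \<Rightarrow> bool" where
  "no_crossing G T x \<longleftrightarrow>
     (\<forall>m \<in> {LamArrow x (x+1), LamArrow (x+1) x, MuArrow x (x+1), MuArrow (x+1) x}.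
        G m \<inter> {..T} = {})"

text \<open>Almost sure properties of a realization of the independent Poisson
  processes of the graphical construction (nearest neighbour arrows only,
  all mark times positive, locally finite in time, pairwise distinct times,
  and infinitely many edges in both directions not crossed by any arrow up to
  any finite time horizon).\<close>
definition good_realization :: "realization \<Rightarrow> bool" where
  "good_realization G \<longleftrightarrow>
     (\<forall>x y. G (LamArrow x y) \<noteq> {} \<longrightarrow> y = x + 1 \<or> y = x - 1) \<and>
     (\<forall>x y. G (MuArrow x y) \<noteq> {} \<longrightarrow> y = x + 1 \<or> y = x - 1) \<and>
     (\<forall>m. \<forall>s \<in> G m. 0 < s) \<and>
     (\<forall>m T. finite (G m \<inter> {..T})) \<and>
     (\<forall>m m'. m \<noteq> m' \<longrightarrow> G m \<inter> G m' = {}) \<and>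
     (\<forall>T n. (\<exists>x \<ge> n. no_crossing G T x) \<and> (\<exists>x \<le> -n. no_crossing G T x))"

text \<open>Oriented paths: reach G x s y t means there is an oriented path from
  (x,s) to (y,t) going up time lines without passing through a recovery mark
  and along arrows of either type in the direction of the arrow.\<close>
inductive reach :: "realization \<Rightarrow> int \<Rightarrow> real \<Rightarrow> int \<Rightarrow> real \<Rightarrow> bool" for G where
  vert: "s \<le> t \<Longrightarrow> G (Recov x) \<inter> {s<..t} = {} \<Longrightarrow> reach G x s x t"
| jump: "reach G x s z u \<Longrightarrow> u \<in> G (LamArrow z w) \<union> G (MuArrow z w) \<Longrightarrow>
         reach G w u y t \<Longrightarrow> reach G x s y t"

text \<open>The contact process with parameter mu started from A.\<close>
definition contact_process :: "realization \<Rightarrow> int set \<Rightarrow> real \<Rightarrow> int set" where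
  "contact_process G A t = {y. \<exists>x \<in> A. reach G x 0 y t}"

definition affects :: "int \<Rightarrow> mark \<Rightarrow> bool" where
  "affects x m \<longleftrightarrow> m = Recov x \<or> (\<exists>y. m = LamArrow y x \<or> m = MuArrow y x)"

text \<open>zeta is the three state process defined from G by the graphical
  construction, started from the standard initial configuration: the state of a
  site only changes at marks affecting it (right-continuously), and at such a
  mark it is updated according to the rules, using the states just before.\<close>
definition three_state_process :: "realization \<Rightarrow> (real \<Rightarrow> int \<Rightarrow> int) \<Rightarrow> bool" where
  "three_state_process G \<zeta> \<longleftrightarrow>
     \<zeta> 0 = (\<lambda>x. if x = 0 then 1 else -1) \<and>
     (\<forall>x s t. 0 \<le> s \<longrightarrow> s \<le> t \<longrightarrow>
        (\<forall>m. affects x m \<longrightarrow> G m \<inter> {s<..t} = {}) \<longrightarrow> \<zeta> t x = \<zeta> s x) \<and>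
     (\<forall>x. \<forall>s \<in> G (Recov x). \<exists>\<epsilon>>0. \<epsilon> \<le> s \<and> (\<forall>u \<in> {s-\<epsilon><..<s}.
        \<zeta> s x = (if \<zeta> u x = 1 then 0 else \<zeta> u x))) \<and>
     (\<forall>x y. \<forall>s \<in> G (LamArrow y x). \<exists>\<epsilon>>0. \<epsilon> \<le> s \<and> (\<forall>u \<in> {s-\<epsilon><..<s}.
        \<zeta> s x = (if \<zeta> u y = 1 \<and> (\<zeta> u x = 0 \<or> \<zeta> u x = -1) then 1 else \<zeta> u x))) \<and>
     (\<forall>x y. \<forall>s \<in> G (MuArrow y x). \<exists>\<epsilon>>0. \<epsilon> \<le> s \<and> (\<forall>u \<in> {s-\<epsilon><..<s}.
        \<zeta> s x = (if \<zeta> u y = 1 \<and> \<zeta> u x = 0 then 1 else \<zeta> u x)))"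

end

theory Submission
  imports Defs
begin


definition alive :: "realization \<Rightarrow> int \<Rightarrow> real \<Rightarrow> bool" where
  "alive G y t \<longleftrightarrow> (\<exists>x. reach G x 0 y t)"

definition no_affect :: "realization \<Rightarrow> int \<Rightarrow> real \<Rightarrow> real \<Rightarrow> bool" where
  "no_affect G y s t \<longleftrightarrow> (\<forall>m. affects y m \<longrightarrow> G m \<inter> {s<..t} = {})"

lemma reach_le: "reach G x s y t \<Longrightarrow> s \<le> t"
  by (induction rule: reach.induct) auto

lemma reach_pre:
  assumes "reach G x u y t"
  shows "s \<le> u \<Longrightarrow> G (Recov x) \<inter> {s<..u} = {} \<Longrightarrow> reach G x s y t"
  using assms
proof (induction arbitrary: s rule: reach.induct)
  case (vert s' t' x)
  have "G (Recov x) \<inter> {s<..t'} = {}"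
  proof -
    have "{s<..t'} \<subseteq> {s<..s'} \<union> {s'<..t'}" by auto
    then show ?thesis using vert by blast
  qed
  then show ?case using vert by (intro reach.vert) auto
next
  case (jump x s' z u w y t)
  have "reach G x s z u" using jump.IH(1) jump.prems by blast
  then show ?case using jump.hyps(2,3) by (rule reach.jump)
qed

lemma reach_trans:
  assumes "reach G x s z u"
  shows "reach G z u y t \<Longrightarrow> reach G x s y t"
  using assms
proof (induction arbitrary: y t rule: reach.induct)
  case (vert s t x)
  then show ?case using reach_pre by blast
next
  case (jump x s z u w y' t')
  have "reach G w u y t" using jump.IH(2) jump.prems by blast
  with jump.hyps(1,2) show ?case by (rule reach.jump)
qed

lemma reach_last:
  assumes "reach G x s y t"
  shows "\<exists>u. s \<le> u \<and> u \<le> t \<and> G (Recov y) \<inter> {u<..t} = {} \<and>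
     ((u = s \<and> x = y) \<or> (\<exists>z. reach G x s z u \<and> u \<in> G (LamArrow z y) \<union> G (MuArrow z y)))"
  using assms
proof (induction rule: reach.induct)
  case (vert s t x)
  then show ?case by auto
next
  case (jump x s z u w y t)
  from jump.IH(2) obtain u' where u': "u \<le> u'" "u' \<le> t" "G (Recov y) \<inter> {u'<..t} = {}"
    "(u' = u \<and> w = y) \<or> (\<exists>z'. reach G w u z' u' \<and> u' \<in> G (LamArrow z' y) \<union> G (MuArrow z' y))"
    by blast
  have su: "s \<le> u" using jump.hyps(1) reach_le by blast
  show ?case
  proof (cases "u' = u \<and> w = y")
    case True
    then show ?thesis using u' su jump.hyps by auto
  next
    case False
    then obtain z' where "reach G w u z' u'" "u' \<in> G (LamArrow z' y) \<union> G (MuArrow z' y)"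
      using u' by blast
    note zz = this
    have "reach G x s z' u'" using jump.hyps(1,2) zz(1) by (rule reach.jump)
    moreover have "s \<le> u'" using su u'(1) by linarith
    ultimately show ?thesis using u' zz(2) by blast
  qed
qed

lemma no_affectD:
  assumes "no_affect G y s t"
  shows "G (Recov y) \<inter> {s<..t} = {}" "G (LamArrow z y) \<inter> {s<..t} = {}"
    "G (MuArrow z y) \<inter> {s<..t} = {}"
proof -
  have h: "\<And>m. affects y m \<Longrightarrow> G m \<inter> {s<..t} = {}" using assms unfolding no_affect_def by blast
  show "G (Recov y) \<inter> {s<..t} = {}" by (rule h) (simp add: affects_def)
  show "G (LamArrow z y) \<inter> {s<..t} = {}" by (rule h) (simp add: affects_def)
  show "G (MuArrow z y) \<inter> {s<..t} = {}" by (rule h) (simp add: affects_def)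
qed

lemma alive_const:
  assumes "0 \<le> s" "s \<le> t" "no_affect G y s t"
  shows "alive G y t \<longleftrightarrow> alive G y s"
proof
  assume "alive G y s"
  then obtain x where "reach G x 0 y s" unfolding alive_def by blast
  note r1 = this
  have "G (Recov y) \<inter> {s<..t} = {}"
    using no_affectD[OF assms(3)] by blast
  then have "reach G y s y t"
    using assms(2) by (intro reach.vert)
  then show "alive G y t" unfolding alive_def using reach_trans[OF r1] by blast
next
  assume "alive G y t"
  then obtain x where r: "reach G x 0 y t" unfolding alive_def by blast
  from reach_last[OF r] obtain u where u: "0 \<le> u" "u \<le> t" "G (Recov y) \<inter> {u<..t} = {}"
     "(u = 0 \<and> x = y) \<or> (\<exists>z. reach G x 0 z u \<and> u \<in> G (LamArrow z y) \<union> G (MuArrow z y))"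
    by blast
  have us: "u \<le> s"
  proof (rule ccontr)
    assume "\<not> u \<le> s"
    then have "u \<noteq> 0" using assms by auto
    then obtain z where "u \<in> G (LamArrow z y) \<union> G (MuArrow z y)" using u by blast
    moreover have "u \<in> {s<..t}" using \<open>\<not> u \<le> s\<close> u(2) by auto
    ultimately show False using no_affectD(2)[OF assms(3), of z] no_affectD(3)[OF assms(3), of z] by blast
  qed
  have rec: "G (Recov y) \<inter> {u<..s} = {}" using u(3) assms(2) by auto
  show "alive G y s"
  proof (cases "u = 0 \<and> x = y")
    case True
    then have "reach G y 0 y s" using rec assms by (intro reach.vert) auto
    then show ?thesis unfolding alive_def by blast
  next
    case False
    then obtain z where z: "reach G x 0 z u" "u \<in> G (LamArrow z y) \<union> G (MuArrow z y)" using u by blast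
    have "reach G y u y s" using rec us by (intro reach.vert) auto
    then have "reach G x 0 y s" by (rule reach.jump[OF z(1) z(2)])
    then show ?thesis unfolding alive_def by blast
  qed
qed



lemma gr_nbL: "good_realization G \<Longrightarrow> G (LamArrow z y) \<noteq> {} \<Longrightarrow> y = z + 1 \<or> y = z - 1"
  unfolding good_realization_def by blast
lemma gr_nbM: "good_realization G \<Longrightarrow> G (MuArrow z y) \<noteq> {} \<Longrightarrow> y = z + 1 \<or> y = z - 1"
  unfolding good_realization_def by blast
lemma gr_pos: "good_realization G \<Longrightarrow> s \<in> G m \<Longrightarrow> 0 < s"
  unfolding good_realization_def by blast
lemma gr_fin: "good_realization G \<Longrightarrow> finite (G m \<inter> {..T})"
  unfolding good_realization_def by blast
lemma gr_disj: "good_realization G \<Longrightarrow> m \<noteq> m' \<Longrightarrow> s \<in> G m \<Longrightarrow> s \<notin> G m'"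
  unfolding good_realization_def by blast
lemma gr_barR: "good_realization G \<Longrightarrow> \<exists>x \<ge> n. no_crossing G T x"
  unfolding good_realization_def by blast
lemma gr_barL: "good_realization G \<Longrightarrow> \<exists>x \<le> -n. no_crossing G T x"
  unfolding good_realization_def by blast

lemma alive_from_last:
  assumes "u' \<le> s" "G (Recov y) \<inter> {u'<..s} = {}"
    "(u' = 0 \<and> x = y) \<or> (\<exists>z. reach G x 0 z u' \<and> u' \<in> G (LamArrow z y) \<union> G (MuArrow z y))"
  shows "alive G y s"
proof (cases "u' = 0 \<and> x = y")
  case True
  then have "reach G y 0 y s" using assms by (intro reach.vert) auto
  then show ?thesis unfolding alive_def by blast
next
  case False
  then obtain z where z: "reach G x 0 z u'" "u' \<in> G (LamArrow z y) \<union> G (MuArrow z y)" using assms by blast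
  have "reach G y u' y s" using assms by (intro reach.vert) auto
  then have "reach G x 0 y s" by (rule reach.jump[OF z(1) z(2)])
  then show ?thesis unfolding alive_def by blast
qed

lemma alive_recov:
  assumes g: "good_realization G" and e: "e \<in> G (Recov y)"
  shows "\<not> alive G y e"
proof
  assume "alive G y e"
  then obtain x where r: "reach G x 0 y e" unfolding alive_def by blast
  from reach_last[OF r] obtain u where u: "0 \<le> u" "u \<le> e" "G (Recov y) \<inter> {u<..e} = {}"
     "(u = 0 \<and> x = y) \<or> (\<exists>z. reach G x 0 z u \<and> u \<in> G (LamArrow z y) \<union> G (MuArrow z y))"
    by blast
  have "u = e"
  proof (rule ccontr)
    assume "u \<noteq> e"
    then have "e \<in> {u<..e}" using u(2) by auto
    then show False using u(3) e by blast
  qed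
  moreover have "0 < e" using gr_pos[OF g e] .
  ultimately obtain z where "e \<in> G (LamArrow z y) \<union> G (MuArrow z y)" using u(4) by auto
  then show False using gr_disj[OF g, of "Recov y" "LamArrow z y"] gr_disj[OF g, of "Recov y" "MuArrow z y"] e
    by auto
qed

lemma alive_arrow:
  assumes g: "good_realization G"
    and hm: "m = LamArrow z y \<or> m = MuArrow z y" and em: "e \<in> G m" and zy: "z \<noteq> y"
    and u: "0 \<le> u" "u < e"
    and oy: "\<And>m'. affects y m' \<Longrightarrow> G m' \<inter> {u<..<e} = {}"
    and oz: "\<And>m'. affects z m' \<Longrightarrow> G m' \<inter> {u<..<e} = {}"
  shows "alive G y e \<longleftrightarrow> alive G y u \<or> alive G z u"
proof -
  have naz: "no_affect G z u e" unfolding no_affect_def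
  proof (intro allI impI)
    fix m' assume am: "affects z m'"
    show "G m' \<inter> {u<..e} = {}"
    proof (rule ccontr)
      assume "G m' \<inter> {u<..e} \<noteq> {}"
      then obtain r where r: "r \<in> G m'" "u < r" "r \<le> e" by auto
      show False
      proof (cases "r = e")
        case True
        have "m' = m" using gr_disj[OF g, of m' m] r(1) em True by blast
        then show False using am hm zy unfolding affects_def by auto
      next
        case False
        then show False using oz[OF am] r by auto
      qed
    qed
  qed
  have ry: "G (Recov y) \<inter> {u<..e} = {}"
  proof (rule ccontr)
    assume "G (Recov y) \<inter> {u<..e} \<noteq> {}"
    then obtain r where r: "r \<in> G (Recov y)" "u < r" "r \<le> e" by auto
    show False
    proof (cases "r = e")
      case True
      have "Recov y = m" using gr_disj[OF g, of "Recov y" m] r(1) em True by blast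
      then show False using hm by auto
    next
      case False
      then show False using oy[of "Recov y"] r by (auto simp: affects_def)
    qed
  qed
  have eu: "e \<in> G (LamArrow z y) \<union> G (MuArrow z y)" using hm em by auto
  show ?thesis
  proof
    assume "alive G y u \<or> alive G z u"
    then show "alive G y e"
    proof
      assume "alive G y u"
      then obtain x where r1: "reach G x 0 y u" unfolding alive_def by blast
      have "reach G y u y e" using ry u by (intro reach.vert) auto
      then show ?thesis using reach_trans[OF r1] unfolding alive_def by blast
    next
      assume "alive G z u"
      then have "alive G z e" using alive_const[OF u(1) _ naz] u by auto
      then obtain x where r1: "reach G x 0 z e" unfolding alive_def by blast
      have "reach G y e y e" by (intro reach.vert) auto
      then have "reach G x 0 y e" by (rule reach.jump[OF r1 eu])
      then show ?thesis unfolding alive_def by blast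
    qed
  next
    assume "alive G y e"
    then obtain x where r: "reach G x 0 y e" unfolding alive_def by blast
    from reach_last[OF r] obtain u' where u': "0 \<le> u'" "u' \<le> e" "G (Recov y) \<inter> {u'<..e} = {}"
       "(u' = 0 \<and> x = y) \<or> (\<exists>z. reach G x 0 z u' \<and> u' \<in> G (LamArrow z y) \<union> G (MuArrow z y))"
      by blast
    consider "u' \<le> u" | "u < u'" "u' < e" | "u' = e" using u'(2) by linarith
    then show "alive G y u \<or> alive G z u"
    proof cases
      case 1
      have "G (Recov y) \<inter> {u'<..u} = {}" using u'(3) u by auto
      then show ?thesis using alive_from_last[OF 1 _ u'(4)] by blast
    next
      case 2
      then have "u' \<noteq> 0" using u by auto
      then obtain z' where "u' \<in> G (LamArrow z' y) \<union> G (MuArrow z' y)" using u'(4) by blast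
      then show ?thesis using oy[of "LamArrow z' y"] oy[of "MuArrow z' y"] 2
        by (auto simp: affects_def)
    next
      case 3
      have "0 < e" using gr_pos[OF g em] .
      then obtain z' where z': "reach G x 0 z' e" "e \<in> G (LamArrow z' y) \<union> G (MuArrow z' y)"
        using u'(4) 3 by auto
      have "z' = z"
      proof (rule ccontr)
        assume "z' \<noteq> z"
        then have "LamArrow z' y \<noteq> m" "MuArrow z' y \<noteq> m" using hm by auto
        then show False using z'(2) gr_disj[OF g, of "LamArrow z' y" m] gr_disj[OF g, of "MuArrow z' y" m] em
          by auto
      qed
      then have "alive G z e" using z' unfolding alive_def by blast
      then have "alive G z u" using alive_const[OF u(1) _ naz] u by auto
      then show ?thesis by blast
    qed
  qed
qed



lemma event_induct:
  fixes E :: "real set" and T :: real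
  assumes fin: "finite E" and pos: "\<And>e. e \<in> E \<Longrightarrow> 0 < e"
    and P0: "P 0"
    and step: "\<And>s t. 0 \<le> s \<Longrightarrow> s \<le> t \<Longrightarrow> t \<le> T \<Longrightarrow> E \<inter> {s<..t} = {} \<Longrightarrow> P s \<Longrightarrow> P t"
    and ev: "\<And>e u0. e \<in> E \<Longrightarrow> e \<le> T \<Longrightarrow> 0 \<le> u0 \<Longrightarrow> u0 < e \<Longrightarrow> E \<inter> {u0<..<e} = {}
               \<Longrightarrow> (\<And>u. u0 \<le> u \<Longrightarrow> u < e \<Longrightarrow> P u) \<Longrightarrow> P e"
  shows "0 \<le> t \<Longrightarrow> t \<le> T \<Longrightarrow> P t"
proof (induction "card (E \<inter> {..t})" arbitrary: t rule: less_induct)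
  case less
  show ?case
  proof (cases "E \<inter> {..t} = {}")
    case True
    then have "E \<inter> {0<..t} = {}" by auto
    then show ?thesis using step[of 0 t] P0 less.prems by auto
  next
    case False
    define e where "e = Max (E \<inter> {..t})"
    have fe: "finite (E \<inter> {..t})" using fin by auto
    have eE: "e \<in> E" "e \<le> t" using Max_in[OF fe False] unfolding e_def by auto
    have emax: "E \<inter> {e<..t} = {}"
    proof -
      { fix x assume "x \<in> E" "e < x" "x \<le> t"
        then have "x \<le> e" unfolding e_def using Max_ge[OF fe] by auto
        then have False using \<open>e < x\<close> by auto }
      then show ?thesis by auto
    qed
    have e0: "0 < e" using pos eE by auto
    have "P e"
    proof (cases "E \<inter> {..<e} = {}")
      case True
      show ?thesis
      proof (rule ev[OF eE(1) _ _ e0])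
        show "e \<le> T" using eE less.prems by auto
        show "E \<inter> {0<..<e} = {}" using True by auto
        fix u assume "0 \<le> u" "u < e"
        moreover have "E \<inter> {0<..u} = {}" using True \<open>u < e\<close> by auto
        ultimately show "P u" using step[of 0 u] P0 eE less.prems by auto
      qed simp
    next
      case False
      define e' where "e' = Max (E \<inter> {..<e})"
      have fe': "finite (E \<inter> {..<e})" using fin by auto
      have e'E: "e' \<in> E" "e' < e" using Max_in[OF fe' False] unfolding e'_def by auto
      have emax': "E \<inter> {e'<..<e} = {}"
      proof -
        { fix x assume "x \<in> E" "e' < x" "x < e"
          then have "x \<le> e'" unfolding e'_def using Max_ge[OF fe'] by auto
          then have False using \<open>e' < x\<close> by auto }
        then show ?thesis by auto
      qed
      have e'0: "0 \<le> e'" using pos e'E by force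
      have "E \<inter> {..e'} \<subseteq> E \<inter> {..t}" using e'E eE by auto
      moreover have "e \<in> E \<inter> {..t}" "e \<notin> E \<inter> {..e'}" using e'E eE by auto
      ultimately have "E \<inter> {..e'} \<subset> E \<inter> {..t}" by blast
      then have "card (E \<inter> {..e'}) < card (E \<inter> {..t})" using fe by (rule psubset_card_mono[rotated])
      then have Pe': "P e'" using less.hyps[of e'] e'0 e'E eE less.prems by auto
      show ?thesis
      proof (rule ev[OF eE(1) _ e'0 e'E(2) emax'])
        show "e \<le> T" using eE less.prems by auto
        fix u assume "e' \<le> u" "u < e"
        moreover have "E \<inter> {e'<..u} = {}" using emax' \<open>u < e\<close> by auto
        ultimately show "P u" using step[of e' u] Pe' e'0 eE less.prems by auto
      qed
    qed
    then show ?thesis using step[of e t] emax eE e0 less.prems by auto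
  qed
qed

definition Ev :: "realization \<Rightarrow> int \<Rightarrow> int \<Rightarrow> real \<Rightarrow> real set" where
  "Ev G lo hi T = (\<Union>y\<in>{lo<..hi}. G (Recov y) \<union> G (LamArrow (y-1) y) \<union> G (LamArrow (y+1) y)
      \<union> G (MuArrow (y-1) y) \<union> G (MuArrow (y+1) y)) \<inter> {..T}"

lemma Ev_fin: "good_realization G \<Longrightarrow> finite (Ev G lo hi T)"
proof -
  assume g: "good_realization G"
  have "Ev G lo hi T = (\<Union>y\<in>{lo<..hi}. (G (Recov y) \<inter> {..T}) \<union> (G (LamArrow (y-1) y) \<inter> {..T})
     \<union> (G (LamArrow (y+1) y) \<inter> {..T}) \<union> (G (MuArrow (y-1) y) \<inter> {..T}) \<union> (G (MuArrow (y+1) y) \<inter> {..T}))"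
    unfolding Ev_def by blast
  then show ?thesis using gr_fin[OF g] by simp
qed

lemma Ev_pos: "good_realization G \<Longrightarrow> e \<in> Ev G lo hi T \<Longrightarrow> 0 < e"
  unfolding Ev_def using gr_pos by blast

lemma Ev_le: "e \<in> Ev G lo hi T \<Longrightarrow> e \<le> T"
  unfolding Ev_def by auto

lemma Ev_in:
  assumes g: "good_realization G" and y: "y \<in> {lo<..hi}" and a: "affects y m" and r: "r \<in> G m" "r \<le> T"
  shows "r \<in> Ev G lo hi T"
proof -
  from a consider "m = Recov y" | z where "m = LamArrow z y" | z where "m = MuArrow z y"
    unfolding affects_def by blast
  then show ?thesis
  proof cases
    case 1 then show ?thesis using y r unfolding Ev_def by blast
  next
    case (2 z)
    then have "y = z + 1 \<or> y = z - 1" using gr_nbL[OF g] r by blast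
    then have "z = y - 1 \<or> z = y + 1" by auto
    then show ?thesis using 2 y r unfolding Ev_def by blast
  next
    case (3 z)
    then have "y = z + 1 \<or> y = z - 1" using gr_nbM[OF g] r by blast
    then have "z = y - 1 \<or> z = y + 1" by auto
    then show ?thesis using 3 y r unfolding Ev_def by blast
  qed
qed

lemma Ev_cases:
  assumes e: "e \<in> Ev G lo hi T" and nlo: "no_crossing G T lo" and nhi: "no_crossing G T hi"
  obtains y where "y \<in> {lo<..hi}" "e \<in> G (Recov y)"
  | y z where "y \<in> {lo<..hi}" "z \<in> {lo<..hi}" "z = y - 1 \<or> z = y + 1" "e \<in> G (LamArrow z y)"
  | y z where "y \<in> {lo<..hi}" "z \<in> {lo<..hi}" "z = y - 1 \<or> z = y + 1" "e \<in> G (MuArrow z y)"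
proof -
  from e obtain y where y: "y \<in> {lo<..hi}" and eT: "e \<le> T" and
    ee: "e \<in> G (Recov y) \<or> e \<in> G (LamArrow (y-1) y) \<or> e \<in> G (LamArrow (y+1) y)
      \<or> e \<in> G (MuArrow (y-1) y) \<or> e \<in> G (MuArrow (y+1) y)"
    unfolding Ev_def by blast
  have L: "y - 1 \<in> {lo<..hi}" if "e \<in> G (LamArrow (y-1) y) \<or> e \<in> G (MuArrow (y-1) y)"
  proof (rule ccontr)
    assume "y - 1 \<notin> {lo<..hi}"
    then have "y = lo + 1" using y by auto
    then show False using nlo that eT unfolding no_crossing_def by auto
  qed
  have R: "y + 1 \<in> {lo<..hi}" if "e \<in> G (LamArrow (y+1) y) \<or> e \<in> G (MuArrow (y+1) y)"
  proof (rule ccontr)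
    assume "y + 1 \<notin> {lo<..hi}"
    then have "y = hi" using y by auto
    then show False using nhi that eT unfolding no_crossing_def by auto
  qed
  from ee show ?thesis
  proof (elim disjE)
    assume "e \<in> G (Recov y)" then show ?thesis using y that(1) by blast
  next
    assume h: "e \<in> G (LamArrow (y-1) y)" then show ?thesis using y L that(2)[of y "y-1"] by blast
  next
    assume h: "e \<in> G (LamArrow (y+1) y)" then show ?thesis using y R that(2)[of y "y+1"] by blast
  next
    assume h: "e \<in> G (MuArrow (y-1) y)" then show ?thesis using y L that(3)[of y "y-1"] by blast
  next
    assume h: "e \<in> G (MuArrow (y+1) y)" then show ?thesis using y R that(3)[of y "y+1"] by blast
  qed
qed

lemma Ev_noaff:
  assumes g: "good_realization G" and y: "y \<in> {lo<..hi}" and t: "t \<le> T"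
    and E: "Ev G lo hi T \<inter> {s<..t} = {}"
  shows "no_affect G y s t"
  unfolding no_affect_def
proof (intro allI impI)
  fix m assume "affects y m"
  show "G m \<inter> {s<..t} = {}"
  proof (rule ccontr)
    assume "G m \<inter> {s<..t} \<noteq> {}"
    then obtain r where r: "r \<in> G m" "s < r" "r \<le> t" by auto
    then have "r \<in> Ev G lo hi T" using Ev_in[OF g y \<open>affects y m\<close>] t by auto
    then show False using E r by auto
  qed
qed

lemma Ev_open:
  assumes g: "good_realization G" and y: "y \<in> {lo<..hi}" and e: "e \<le> T"
    and E: "Ev G lo hi T \<inter> {u0<..<e} = {}" and u: "u0 \<le> u" and a: "affects y m"
  shows "G m \<inter> {u<..<e} = {}"
proof (rule ccontr)
  assume "G m \<inter> {u<..<e} \<noteq> {}"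
  then obtain r where r: "r \<in> G m" "u < r" "r < e" by auto
  then have "r \<in> Ev G lo hi T" using Ev_in[OF g y a] e by auto
  then show False using E r u by auto
qed

lemma Ev_at:
  assumes g: "good_realization G" and y: "y \<in> {lo<..hi}" and e: "e \<le> T"
    and E: "Ev G lo hi T \<inter> {u0<..<e} = {}" and u: "u0 \<le> u"
    and em: "e \<in> G m0" and na: "\<not> affects y m0"
  shows "no_affect G y u e"
  unfolding no_affect_def
proof (intro allI impI)
  fix m assume a: "affects y m"
  have "m \<noteq> m0" using a na by auto
  then have "e \<notin> G m" using gr_disj[OF g, of m0 m] em by auto
  moreover have "G m \<inter> {u<..e} \<subseteq> (G m \<inter> {u<..<e}) \<union> (G m \<inter> {e})" by auto
  ultimately show "G m \<inter> {u<..e} = {}" using Ev_open[OF g y e E u a] by auto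
qed

lemma Z_init: "three_state_process G \<zeta> \<Longrightarrow> \<zeta> 0 x = (if x = 0 then 1 else -1)"
  unfolding three_state_process_def by auto

lemma Z_const: "three_state_process G \<zeta> \<Longrightarrow> 0 \<le> s \<Longrightarrow> s \<le> t \<Longrightarrow> no_affect G x s t \<Longrightarrow> \<zeta> t x = \<zeta> s x"
  unfolding three_state_process_def no_affect_def by blast

lemma Z_rec: "three_state_process G \<zeta> \<Longrightarrow> s \<in> G (Recov x) \<Longrightarrow>
   \<exists>\<epsilon>>0. \<forall>u \<in> {s-\<epsilon><..<s}. \<zeta> s x = (if \<zeta> u x = 1 then 0 else \<zeta> u x)"
  unfolding three_state_process_def by blast

lemma Z_lam: "three_state_process G \<zeta> \<Longrightarrow> s \<in> G (LamArrow y x) \<Longrightarrow>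
   \<exists>\<epsilon>>0. \<forall>u \<in> {s-\<epsilon><..<s}. \<zeta> s x = (if \<zeta> u y = 1 \<and> (\<zeta> u x = 0 \<or> \<zeta> u x = -1) then 1 else \<zeta> u x)"
  unfolding three_state_process_def by blast

lemma Z_mu: "three_state_process G \<zeta> \<Longrightarrow> s \<in> G (MuArrow y x) \<Longrightarrow>
   \<exists>\<epsilon>>0. \<forall>u \<in> {s-\<epsilon><..<s}. \<zeta> s x = (if \<zeta> u y = 1 \<and> \<zeta> u x = 0 then 1 else \<zeta> u x)"
  unfolding three_state_process_def by blast

lemma pick_u: "(0::real) \<le> u0 \<Longrightarrow> u0 < e \<Longrightarrow> 0 < \<epsilon> \<Longrightarrow> \<exists>u. u0 \<le> u \<and> u < e \<and> e - \<epsilon> < u"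
  by (rule exI[of _ "max u0 (e - \<epsilon>/2)"]) auto



definition INV :: "(int \<Rightarrow> int) \<Rightarrow> (int \<Rightarrow> bool) \<Rightarrow> bool" where
  "INV f a \<longleftrightarrow> (\<forall>y. f y \<in> {-1,0,1}) \<and>
     (\<forall>x v w. f x = 1 \<longrightarrow> f w = 1 \<longrightarrow> x \<le> v \<longrightarrow> v \<le> w \<longrightarrow> f v \<noteq> -1 \<and> (f v = 1 \<longleftrightarrow> a v))"

lemma INV_D: "INV f a \<Longrightarrow> f x = 1 \<Longrightarrow> f w = 1 \<Longrightarrow> x \<le> v \<Longrightarrow> v \<le> w \<Longrightarrow> f v \<noteq> -1 \<and> (f v = 1 \<longleftrightarrow> a v)"
  unfolding INV_def by blast

lemma INV_vals: "INV f a \<Longrightarrow> f y = -1 \<or> f y = 0 \<or> f y = 1"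
  unfolding INV_def by auto

lemma comb_rec:
  fixes f g :: "int \<Rightarrow> int"
  assumes inv: "INV f a"
    and out: "\<And>w. w \<notin> {lo<..hi} \<Longrightarrow> f w = -1 \<and> g w = -1"
    and oth: "\<And>w. w \<in> {lo<..hi} \<Longrightarrow> w \<noteq> y \<Longrightarrow> g w = f w \<and> (b w \<longleftrightarrow> a w)"
    and gy: "g y = (if f y = 1 then 0 else f y)" and by': "\<not> b y"
  shows "INV g b"
proof -
  have P1: "g w \<in> {-1,0,1}" for w
  proof (cases "w = y")
    case True then show ?thesis using gy INV_vals[OF inv, of y] by auto
  next
    case False then show ?thesis using oth[of w] out[of w] INV_vals[OF inv, of w] by (cases "w \<in> {lo<..hi}") auto
  qed
  have P2: "g v \<noteq> -1 \<and> (g v = 1 \<longleftrightarrow> b v)" if gx: "g x = 1" and gw: "g w = 1" and xv: "x \<le> v" and vw: "v \<le> w" for x v w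
  proof -
  have gy1: "g y \<noteq> 1" using gy by auto
  have xR: "x \<in> {lo<..hi}" using gx out[of x] by force
  have wR: "w \<in> {lo<..hi}" using gw out[of w] by force
  have vR: "v \<in> {lo<..hi}" using xR wR xv vw by auto
  have "x \<noteq> y" "w \<noteq> y" using gx gw gy1 by auto
  then have fx: "f x = 1" and fw: "f w = 1" using oth[OF xR] oth[OF wR] gx gw by auto
  have iv: "f v \<noteq> -1 \<and> (f v = 1 \<longleftrightarrow> a v)" using INV_D[OF inv fx fw xv vw] .
  show "g v \<noteq> -1 \<and> (g v = 1 \<longleftrightarrow> b v)"
  proof (cases "v = y")
    case True
    then show ?thesis using gy iv by' by auto
  next
    case False
    then show ?thesis using oth[OF vR] iv by auto
  qed
  qed
  show ?thesis using P1 P2 unfolding INV_def by blast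
qed

lemma comb_arrow:
  fixes f g :: "int \<Rightarrow> int"
  assumes inv: "INV f a"
    and out: "\<And>w. w \<notin> {lo<..hi} \<Longrightarrow> f w = -1 \<and> g w = -1"
    and oth: "\<And>w. w \<in> {lo<..hi} \<Longrightarrow> w \<noteq> y \<Longrightarrow> g w = f w \<and> (b w \<longleftrightarrow> a w)"
    and zy: "z = y - 1 \<or> z = y + 1"
    and A1: "g y = 1 \<Longrightarrow> f y = 1 \<or> f z = 1"
    and B: "f y = 1 \<Longrightarrow> g y = 1"
    and C: "g y \<noteq> 1 \<Longrightarrow> g y = f y"
    and D: "f z = 1 \<Longrightarrow> f y \<noteq> -1 \<Longrightarrow> g y = 1"
    and al: "b y \<longleftrightarrow> a y \<or> a z"
  shows "INV g b"
proof -
  have P1: "g w \<in> {-1,0,1}" for w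
  proof (cases "w = y")
    case True then show ?thesis using C INV_vals[OF inv, of y] by (cases "g y = 1") auto
  next
    case False then show ?thesis using oth[of w] out[of w] INV_vals[OF inv, of w] by (cases "w \<in> {lo<..hi}") auto
  qed
  have P2: "g v \<noteq> -1 \<and> (g v = 1 \<longleftrightarrow> b v)" if gx: "g x = 1" and gw: "g w = 1" and xv: "x \<le> v" and vw: "v \<le> w" for x v w
  proof -
  have xR: "x \<in> {lo<..hi}" using gx out[of x] by force
  have wR: "w \<in> {lo<..hi}" using gw out[of w] by force
  have vR: "v \<in> {lo<..hi}" using xR wR xv vw by auto
  show "g v \<noteq> -1 \<and> (g v = 1 \<longleftrightarrow> b v)"
  proof (cases "v = y")
    case False
    obtain x' where x': "x' \<le> v" "f x' = 1"
    proof (cases "x = y")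
      case True
      then have "v > y" using xv False by auto
      have "f y = 1 \<or> f z = 1" using A1 gx True by auto
      moreover have "z \<le> v" using zy \<open>v > y\<close> by auto
      ultimately show ?thesis using that[of y] that[of z] \<open>v > y\<close> by auto
    next
      case False
      then show ?thesis using that[of x] oth[OF xR] gx xv by auto
    qed
    obtain w' where w': "v \<le> w'" "f w' = 1"
    proof (cases "w = y")
      case True
      then have "v < y" using vw \<open>v \<noteq> y\<close> by auto
      have "f y = 1 \<or> f z = 1" using A1 gw True by auto
      moreover have "v \<le> z" using zy \<open>v < y\<close> by auto
      ultimately show ?thesis using that[of y] that[of z] \<open>v < y\<close> by auto
    next
      case False
      then show ?thesis using that[of w] oth[OF wR] gw vw by auto
    qed
    have "f v \<noteq> -1 \<and> (f v = 1 \<longleftrightarrow> a v)" using INV_D[OF inv x'(2) w'(2) x'(1) w'(1)] .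
    then show ?thesis using oth[OF vR False] by auto
  next
    case True
    show ?thesis
    proof (cases "g y = 1")
      case gy1: True
      have "a y \<or> a z"
      proof (cases "f y = 1")
        case True
        then show ?thesis using INV_D[OF inv True True order_refl order_refl] by auto
      next
        case False
        then have fz: "f z = 1" using A1 gy1 by auto
        show ?thesis using INV_D[OF inv fz fz order_refl order_refl] using fz by auto
      qed
      then show ?thesis using True gy1 al by auto
    next
      case gy1: False
      have gyf: "g y = f y" using C gy1 .
      have "x \<noteq> y" "w \<noteq> y" using gx gw gy1 by auto
      then have fx: "f x = 1" and fw: "f w = 1" using oth[OF xR] oth[OF wR] gx gw by auto
      have xy: "x < y" and yw: "y < w" using \<open>x \<noteq> y\<close> \<open>w \<noteq> y\<close> xv vw True by auto
      have iy: "f y \<noteq> -1 \<and> (f y = 1 \<longleftrightarrow> a y)" using INV_D[OF inv fx fw] xy yw by auto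
      have fz: "f z \<noteq> 1" using D iy gy1 by auto
      have "x \<le> z" "z \<le> w" using zy xy yw by auto
      then have iz: "f z = 1 \<longleftrightarrow> a z" using INV_D[OF inv fx fw] by auto
      show ?thesis using True gyf gy1 iy fz iz al by auto
    qed
  qed
  qed
  show ?thesis using P1 P2 unfolding INV_def by blast
qed

lemma not_aff:
  "w \<noteq> y \<Longrightarrow> \<not> affects w (Recov y)"
  "w \<noteq> y \<Longrightarrow> \<not> affects w (LamArrow z y)"
  "w \<noteq> y \<Longrightarrow> \<not> affects w (MuArrow z y)"
  unfolding affects_def by auto

lemma others_const:
  assumes g: "good_realization G" and z: "three_state_process G \<zeta>"
    and w: "w \<in> {lo<..hi}" and e: "e \<le> T"
    and E: "Ev G lo hi T \<inter> {u0<..<e} = {}" and u: "u0 \<le> u" "0 \<le> u" "u \<le> e"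
    and em: "e \<in> G m0" and na: "\<not> affects w m0"
  shows "\<zeta> e w = \<zeta> u w \<and> (alive G w e \<longleftrightarrow> alive G w u)"
proof -
  have n: "no_affect G w u e" using Ev_at[OF g w e E u(1) em na] .
  show ?thesis using Z_const[OF z u(2,3) n] alive_const[OF u(2,3) n] by auto
qed



lemma region_dead:
  assumes g: "good_realization G" and z: "three_state_process G \<zeta>"
    and nlo: "no_crossing G T lo" and nhi: "no_crossing G T hi" and n0: "0 \<notin> {lo<..hi}"
  shows "0 \<le> t \<Longrightarrow> t \<le> T \<Longrightarrow> \<forall>y\<in>{lo<..hi}. \<zeta> t y = -1"
proof (rule event_induct[where E = "Ev G lo hi T" and T = T and P = "\<lambda>t. \<forall>y\<in>{lo<..hi}. \<zeta> t y = -1"])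
  show "finite (Ev G lo hi T)" using Ev_fin[OF g] .
  show "\<And>e. e \<in> Ev G lo hi T \<Longrightarrow> 0 < e" using Ev_pos[OF g] by blast
  show "\<forall>y\<in>{lo<..hi}. \<zeta> 0 y = -1" using Z_init[OF z] n0 by auto
  show "\<forall>y\<in>{lo<..hi}. \<zeta> t y = -1" if "0 \<le> s" "s \<le> t" "t \<le> T" "Ev G lo hi T \<inter> {s<..t} = {}"
     "\<forall>y\<in>{lo<..hi}. \<zeta> s y = -1" for s t
    using Z_const[OF z that(1,2) Ev_noaff[OF g _ that(3,4)]] that(5) by auto
next
  fix e u0
  assume eE: "e \<in> Ev G lo hi T" and eT: "e \<le> T" and u00: "0 \<le> u0" and ue: "u0 < e"
    and Eo: "Ev G lo hi T \<inter> {u0<..<e} = {}"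
    and IH: "\<And>u. u0 \<le> u \<Longrightarrow> u < e \<Longrightarrow> \<forall>y\<in>{lo<..hi}. \<zeta> u y = -1"
  show "\<forall>y\<in>{lo<..hi}. \<zeta> e y = -1"
  proof (cases rule: Ev_cases[OF eE nlo nhi])
    case (1 y)
    obtain \<epsilon> where ep: "\<epsilon> > 0" "\<forall>u \<in> {e-\<epsilon><..<e}. \<zeta> e y = (if \<zeta> u y = 1 then 0 else \<zeta> u y)"
      using Z_rec[OF z 1(2)] by blast
    obtain u where u: "u0 \<le> u" "u < e" "e - \<epsilon> < u" using pick_u[OF u00 ue ep(1)] by blast
    have Pu: "\<forall>y\<in>{lo<..hi}. \<zeta> u y = -1" using IH u by auto
    show ?thesis
    proof
      fix w assume wR: "w \<in> {lo<..hi}"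
      show "\<zeta> e w = -1"
      proof (cases "w = y")
        case True then show ?thesis using ep(2) u Pu 1(1) by auto
      next
        case False
        then show ?thesis using others_const[OF g z wR eT Eo u(1) _ _ 1(2) not_aff(1)[OF False]] u u00 Pu wR
          by auto
      qed
    qed
  next
    case (2 y zz)
    obtain \<epsilon> where ep: "\<epsilon> > 0" "\<forall>u \<in> {e-\<epsilon><..<e}. \<zeta> e y = (if \<zeta> u zz = 1 \<and> (\<zeta> u y = 0 \<or> \<zeta> u y = -1) then 1 else \<zeta> u y)"
      using Z_lam[OF z 2(4)] by blast
    obtain u where u: "u0 \<le> u" "u < e" "e - \<epsilon> < u" using pick_u[OF u00 ue ep(1)] by blast
    have Pu: "\<forall>y\<in>{lo<..hi}. \<zeta> u y = -1" using IH u by auto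
    show ?thesis
    proof
      fix w assume wR: "w \<in> {lo<..hi}"
      show "\<zeta> e w = -1"
      proof (cases "w = y")
        case True then show ?thesis using ep(2) u Pu 2(1,2) by auto
      next
        case False
        then show ?thesis using others_const[OF g z wR eT Eo u(1) _ _ 2(4) not_aff(2)[OF False]] u u00 Pu wR
          by auto
      qed
    qed
  next
    case (3 y zz)
    obtain \<epsilon> where ep: "\<epsilon> > 0" "\<forall>u \<in> {e-\<epsilon><..<e}. \<zeta> e y = (if \<zeta> u zz = 1 \<and> \<zeta> u y = 0 then 1 else \<zeta> u y)"
      using Z_mu[OF z 3(4)] by blast
    obtain u where u: "u0 \<le> u" "u < e" "e - \<epsilon> < u" using pick_u[OF u00 ue ep(1)] by blast
    have Pu: "\<forall>y\<in>{lo<..hi}. \<zeta> u y = -1" using IH u by auto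
    show ?thesis
    proof
      fix w assume wR: "w \<in> {lo<..hi}"
      show "\<zeta> e w = -1"
      proof (cases "w = y")
        case True then show ?thesis using ep(2) u Pu 3(1,2) by auto
      next
        case False
        then show ?thesis using others_const[OF g z wR eT Eo u(1) _ _ 3(4) not_aff(3)[OF False]] u u00 Pu wR
          by auto
      qed
    qed
  qed
qed



lemma INV_transfer:
  assumes "INV f a" "\<And>w. w \<notin> {lo<..hi} \<Longrightarrow> f w = -1"
    "\<And>w. g w = f w" "\<And>w. w \<in> {lo<..hi} \<Longrightarrow> b w = a w"
  shows "INV g b"
proof -
  have P1: "g w \<in> {-1,0,1}" for w using assms(1,3) unfolding INV_def by auto
  have P2: "g v \<noteq> -1 \<and> (g v = 1 \<longleftrightarrow> b v)" if gx: "g x = 1" and gw: "g w = 1" and xv: "x \<le> v" and vw: "v \<le> w" for x v w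
  proof -
    have fx: "f x = 1" "f w = 1" using gx gw assms(3) by auto
    have "x \<in> {lo<..hi}" "w \<in> {lo<..hi}" using fx assms(2) by force+
    then have "v \<in> {lo<..hi}" using xv vw by auto
    then show ?thesis using INV_D[OF assms(1) fx xv vw] assms(3,4) by auto
  qed
  show ?thesis using P1 P2 unfolding INV_def by blast
qed

lemma main_inv:
  assumes g: "good_realization G" and z: "three_state_process G \<zeta>"
    and nlo: "no_crossing G T lo" and nhi: "no_crossing G T hi"
    and dead: "\<And>s w. 0 \<le> s \<Longrightarrow> s \<le> T \<Longrightarrow> w \<notin> {lo<..hi} \<Longrightarrow> \<zeta> s w = -1"
  shows "0 \<le> t \<Longrightarrow> t \<le> T \<Longrightarrow> INV (\<zeta> t) (\<lambda>v. alive G v t)"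
proof (rule event_induct[where E = "Ev G lo hi T" and T = T and P = "\<lambda>t. INV (\<zeta> t) (\<lambda>v. alive G v t)"])
  show "finite (Ev G lo hi T)" using Ev_fin[OF g] .
  show "\<And>e. e \<in> Ev G lo hi T \<Longrightarrow> 0 < e" using Ev_pos[OF g] by blast
  show "INV (\<zeta> 0) (\<lambda>v. alive G v 0)"
  proof -
    have a0: "alive G 0 0" unfolding alive_def by (rule exI[of _ 0], rule reach.vert) auto
    show ?thesis unfolding INV_def using Z_init[OF z] a0 by auto
  qed
  show "INV (\<zeta> t) (\<lambda>v. alive G v t)" if st: "0 \<le> s" "s \<le> t" "t \<le> T" "Ev G lo hi T \<inter> {s<..t} = {}"
     and Ps: "INV (\<zeta> s) (\<lambda>v. alive G v s)" for s t
  proof (rule INV_transfer[OF Ps])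
    show "\<zeta> s w = -1" if "w \<notin> {lo<..hi}" for w using dead[OF st(1) _ that] st by auto
    show "\<zeta> t w = \<zeta> s w" for w
    proof (cases "w \<in> {lo<..hi}")
      case True show ?thesis using Z_const[OF z st(1,2) Ev_noaff[OF g True st(3,4)]] .
    next
      case False then show ?thesis using dead st by auto
    qed
    show "alive G w t = alive G w s" if wR: "w \<in> {lo<..hi}" for w
      using alive_const[OF st(1,2) Ev_noaff[OF g wR st(3,4)]] .
  qed
next
  fix e u0
  assume eE: "e \<in> Ev G lo hi T" and eT: "e \<le> T" and u00: "0 \<le> u0" and ue: "u0 < e"
    and Eo: "Ev G lo hi T \<inter> {u0<..<e} = {}"
    and IH: "\<And>u. u0 \<le> u \<Longrightarrow> u < e \<Longrightarrow> INV (\<zeta> u) (\<lambda>v. alive G v u)"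
  have e0: "0 < e" using Ev_pos[OF g eE] .
  show "INV (\<zeta> e) (\<lambda>v. alive G v e)"
  proof (cases rule: Ev_cases[OF eE nlo nhi])
    case (1 y)
    obtain \<epsilon> where ep: "\<epsilon> > 0" "\<forall>u \<in> {e-\<epsilon><..<e}. \<zeta> e y = (if \<zeta> u y = 1 then 0 else \<zeta> u y)"
      using Z_rec[OF z 1(2)] by blast
    obtain u where u: "u0 \<le> u" "u < e" "e - \<epsilon> < u" using pick_u[OF u00 ue ep(1)] by blast
    have Pu: "INV (\<zeta> u) (\<lambda>v. alive G v u)" using IH u by auto
    show ?thesis
    proof (rule comb_rec[OF Pu])
      show "\<zeta> u w = -1 \<and> \<zeta> e w = -1" if "w \<notin> {lo<..hi}" for w
        using dead[OF _ _ that, of u] dead[OF _ _ that, of e] u u00 eT by auto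
      show "\<zeta> e w = \<zeta> u w \<and> alive G w e = alive G w u" if "w \<in> {lo<..hi}" "w \<noteq> y" for w
        using others_const[OF g z that(1) eT Eo u(1) _ _ 1(2) not_aff(1)[OF that(2)]] u u00 by auto
      show "\<zeta> e y = (if \<zeta> u y = 1 then 0 else \<zeta> u y)" using ep(2) u by auto
      show "\<not> alive G y e" using alive_recov[OF g 1(2)] .
    qed
  next
    case (2 y zz)
    obtain \<epsilon> where ep: "\<epsilon> > 0" "\<forall>u \<in> {e-\<epsilon><..<e}. \<zeta> e y = (if \<zeta> u zz = 1 \<and> (\<zeta> u y = 0 \<or> \<zeta> u y = -1) then 1 else \<zeta> u y)"
      using Z_lam[OF z 2(4)] by blast
    obtain u where u: "u0 \<le> u" "u < e" "e - \<epsilon> < u" using pick_u[OF u00 ue ep(1)] by blast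
    have Pu: "INV (\<zeta> u) (\<lambda>v. alive G v u)" using IH u by auto
    have gy: "\<zeta> e y = (if \<zeta> u zz = 1 \<and> (\<zeta> u y = 0 \<or> \<zeta> u y = -1) then 1 else \<zeta> u y)" using ep(2) u by auto
    have fy: "\<zeta> u y = -1 \<or> \<zeta> u y = 0 \<or> \<zeta> u y = 1" using INV_vals[OF Pu] .
    have zy: "zz \<noteq> y" using 2(3) by auto
    have al: "alive G y e \<longleftrightarrow> alive G y u \<or> alive G zz u"
      using alive_arrow[OF g _ 2(4) zy u00[THEN order_trans, OF u(1)] u(2)
          Ev_open[OF g 2(1) eT Eo u(1)] Ev_open[OF g 2(2) eT Eo u(1)]] by auto
    show ?thesis
    proof (rule comb_arrow[OF Pu _ _ 2(3)])
      show "\<zeta> u w = -1 \<and> \<zeta> e w = -1" if "w \<notin> {lo<..hi}" for w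
        using dead[OF _ _ that, of u] dead[OF _ _ that, of e] u u00 eT by auto
      show "\<zeta> e w = \<zeta> u w \<and> alive G w e = alive G w u" if "w \<in> {lo<..hi}" "w \<noteq> y" for w
        using others_const[OF g z that(1) eT Eo u(1) _ _ 2(4) not_aff(2)[OF that(2)]] u u00 by auto
    qed (use gy fy al in auto)
  next
    case (3 y zz)
    obtain \<epsilon> where ep: "\<epsilon> > 0" "\<forall>u \<in> {e-\<epsilon><..<e}. \<zeta> e y = (if \<zeta> u zz = 1 \<and> \<zeta> u y = 0 then 1 else \<zeta> u y)"
      using Z_mu[OF z 3(4)] by blast
    obtain u where u: "u0 \<le> u" "u < e" "e - \<epsilon> < u" using pick_u[OF u00 ue ep(1)] by blast
    have Pu: "INV (\<zeta> u) (\<lambda>v. alive G v u)" using IH u by auto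
    have gy: "\<zeta> e y = (if \<zeta> u zz = 1 \<and> \<zeta> u y = 0 then 1 else \<zeta> u y)" using ep(2) u by auto
    have fy: "\<zeta> u y = -1 \<or> \<zeta> u y = 0 \<or> \<zeta> u y = 1" using INV_vals[OF Pu] .
    have zy: "zz \<noteq> y" using 3(3) by auto
    have al: "alive G y e \<longleftrightarrow> alive G y u \<or> alive G zz u"
      using alive_arrow[OF g _ 3(4) zy u00[THEN order_trans, OF u(1)] u(2)
          Ev_open[OF g 3(1) eT Eo u(1)] Ev_open[OF g 3(2) eT Eo u(1)]] by auto
    show ?thesis
    proof (rule comb_arrow[OF Pu _ _ 3(3)])
      show "\<zeta> u w = -1 \<and> \<zeta> e w = -1" if "w \<notin> {lo<..hi}" for w
        using dead[OF _ _ that, of u] dead[OF _ _ that, of e] u u00 eT by auto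
      show "\<zeta> e w = \<zeta> u w \<and> alive G w e = alive G w u" if "w \<in> {lo<..hi}" "w \<noteq> y" for w
        using others_const[OF g z that(1) eT Eo u(1) _ _ 3(4) not_aff(3)[OF that(2)]] u u00 by auto
    qed (use gy fy al in auto)
  qed
qed



theorem mainTheorem6:
  fixes lam mu :: real and G :: realization and \<zeta> :: "real \<Rightarrow> int \<Rightarrow> int"
  assumes "0 < lam" and "lam \<le> mu"
    and "good_realization G"
    and "three_state_process G \<zeta>"
  shows "\<forall>t \<ge> 0. {x. \<zeta> t x = 1} \<noteq> {} \<longrightarrow>
           {x. \<zeta> t x = 1} = contact_process G UNIV t
              \<inter> {Inf {x. \<zeta> t x = 1} .. Sup {x. \<zeta> t x = 1}}"
proof (intro allI impI)
  fix t :: real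
  assume t0: "0 \<le> t" and ne: "{x. \<zeta> t x = 1} \<noteq> {}"
  note g = assms(3) and z = assms(4)
  obtain hi where hi: "hi \<ge> 1" "no_crossing G t hi" using gr_barR[OF g, of 1 t] by blast
  obtain lo where lo: "lo \<le> -1" "no_crossing G t lo" using gr_barL[OF g, of 1 t] by blast
  have dead: "\<zeta> s w = -1" if s: "0 \<le> s" "s \<le> t" and w: "w \<notin> {lo<..hi}" for s w
  proof (cases "w > hi")
    case True
    obtain hi' where hi': "hi' \<ge> w" "no_crossing G t hi'" using gr_barR[OF g, of w t] by blast
    have "0 \<notin> {hi<..hi'}" using hi by auto
    then show ?thesis using region_dead[OF g z hi(2) hi'(2) _ s] True hi' by auto
  next
    case False
    then have wlo: "w \<le> lo" using w by auto
    obtain lo' where lo': "lo' \<le> -(1 - w)" "no_crossing G t lo'" using gr_barL[OF g, of "1 - w" t] by blast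
    have "0 \<notin> {lo'<..lo}" using lo by auto
    then show ?thesis using region_dead[OF g z lo'(2) lo(2) _ s] wlo lo' by auto
  qed
  have inv: "INV (\<zeta> t) (\<lambda>v. alive G v t)"
    using main_inv[OF g z lo(2) hi(2) dead t0 order_refl] by blast
  define I where "I = {x. \<zeta> t x = 1}"
  have IR: "I \<subseteq> {lo<..hi}" using dead[OF t0 order_refl] unfolding I_def by force
  then have fI: "finite I" using finite_subset by blast
  have neI: "I \<noteq> {}" using ne unfolding I_def .
  have cp: "contact_process G UNIV t = {y. alive G y t}" unfolding contact_process_def alive_def by auto
  have mn: "Min I \<in> I" "Max I \<in> I" using Min_in[OF fI neI] Max_in[OF fI neI] by auto
  have "I = {y. alive G y t} \<inter> {Min I .. Max I}"
  proof
    show "I \<subseteq> {y. alive G y t} \<inter> {Min I .. Max I}"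
    proof
      fix x assume x: "x \<in> I"
      then have "\<zeta> t x = 1" unfolding I_def by auto
      then have "alive G x t" using INV_D[OF inv _ _ order_refl order_refl, of x] by auto
      then show "x \<in> {y. alive G y t} \<inter> {Min I .. Max I}" using Min_le[OF fI x] Max_ge[OF fI x] by auto
    qed
    show "{y. alive G y t} \<inter> {Min I .. Max I} \<subseteq> I"
    proof
      fix x assume x: "x \<in> {y. alive G y t} \<inter> {Min I .. Max I}"
      have "\<zeta> t (Min I) = 1" "\<zeta> t (Max I) = 1" using mn unfolding I_def by auto
      from INV_D[OF inv this, of x] x show "x \<in> I" unfolding I_def by auto
    qed
  qed
  then show "{x. \<zeta> t x = 1} = contact_process G UNIV t \<inter> {Inf {x. \<zeta> t x = 1} .. Sup {x. \<zeta> t x = 1}}"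
    using cInf_eq_Min[OF fI neI] cSup_eq_Max[OF fI neI] cp unfolding I_def by simp
qed


end
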